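(* In the setting below, the group $G_M$ is isomorphic to the semi-direct product $\mathbb Z\ltimes\mathbb Z^{2n+1}$ associated with the action of $\mathbb Z$ on $\mathbb Z^{2n+1}$ in which a generator $t$ of $\mathbb Z$ acts by $t\cdot v=M^\top v$.
   Context: Let $n\ge 1$ and let $M=(m_{ij})\in SL(2n+1,\mathbb Z)$. Assume that $M$ has exactly one real eigenvalue $\alpha$, that $\alpha>0$, $\alpha\neq 1$, that $\alpha$ is a simple eigenvalue, and that the remaining eigenvalues are $\beta_1,\dots,\beta_k,\bar\beta_1,\dots,\bar\beta_k$ with $\mathrm{Im}\,\beta_j>0$. Let $W\subset\mathbb C^{2n+1}$ be the direct sum of the generalized eigenspaces of $M$ for $\beta_1,\dots,\beta_k$ (so $\dim_{\mathbb C}W=n$). Fix a real eigenvector $a=(a^{(1)},\dots,a^{(2n+1)})^\top\in\mathbb R^{2n+1}$ of $M$ for $\alpha$ and a basis $b_1,\dots,b_n$ of $W$, $b_j=(b_j^{(1)},\dots,b_j^{(2n+1)})^\top$, and let $R=(r_{\ell j})\in M_n(\mathbb C)$ be given by $Mb_j=\sum_{\ell=1}^n r_{\ell j}b_\ell$. For $i=1,\dots,2n+1$ put $u_i=(a^{(i)},b_1^{(i)},\dots,b_n^{(i)})^\top\in\mathbb R\times\mathbb C^n$. Let $\mathbb H=\{w\in\mathbb C:\mathrm{Im}\,w>0\}$, and define holomorphic automorphisms of $\mathbb H\times\mathbb C^n$ by $g_0(w,z)=(\alpha w,R^\top z)$ and $g_i(w,z)=(w,z)+u_i$ for $1\le i\le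 2n+1$. Let $G_M$ be the group generated by $g_0,\dots,g_{2n+1}$. *)

theory Defs
  imports "HOL-Analysis.Analysis" "HOL-Computational_Algebra.Polynomial"
    "HOL-Algebra.Bij" "HOL-Algebra.Generated_Groups"
begin

definition real_mat :: "int^'m^'m \<Rightarrow> real^'m^'m" where
  "real_mat M = (\<chi> i j. real_of_int (M $ i $ j))"

definition cplx_mat :: "int^'m^'m \<Rightarrow> complex^'m^'m" where
  "cplx_mat M = (\<chi> i j. complex_of_int (M $ i $ j))"

definition charpoly_c :: "int^'m^'m \<Rightarrow> complex poly" where
  "charpoly_c M = det (\<chi> i j. (if i = j then [:0, 1:] else 0) - [:complex_of_int (M $ i $ j):])"

definition is_eigenvalue_c :: "int^'m^'m \<Rightarrow> complex \<Rightarrow> bool" where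
  "is_eigenvalue_c M e \<longleftrightarrow> (\<exists>v. v \<noteq> 0 \<and> cplx_mat M *v v = e *s v)"

definition gen_eigenspace :: "int^'m^'m \<Rightarrow> complex \<Rightarrow> (complex^'m) set" where
  "gen_eigenspace M \<beta> = {v. \<exists>k. ((\<lambda>x. cplx_mat M *v x - \<beta> *s x) ^^ k) v = 0}"

definition W_space :: "int^'m^'m \<Rightarrow> (complex^'m) set" where
  "W_space M = {v. \<exists>B f. finite B \<and>
      (\<forall>\<beta>\<in>B. is_eigenvalue_c M \<beta> \<and> Im \<beta> > 0 \<and> f \<beta> \<in> gen_eigenspace M \<beta>) \<and>
      v = (\<Sum>\<beta>\<in>B. f \<beta>)}"

text \<open>The domain \<open>\<HH> \<times> \<complex>^n\<close>; points of \<open>\<complex>^n\<close> are functions \<open>nat \<Rightarrow> complex\<close>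
  vanishing from index n on (coordinates 0..n-1 correspond to 1..n).\<close>
definition HC_domain :: "nat \<Rightarrow> (complex \<times> (nat \<Rightarrow> complex)) set" where
  "HC_domain n = {(w, z). Im w > 0 \<and> (\<forall>j\<ge>n. z j = 0)}"

definition g_zero :: "nat \<Rightarrow> real \<Rightarrow> (nat \<Rightarrow> nat \<Rightarrow> complex) \<Rightarrow>
    complex \<times> (nat \<Rightarrow> complex) \<Rightarrow> complex \<times> (nat \<Rightarrow> complex)" where
  "g_zero n \<alpha> R = (\<lambda>(w, z). (complex_of_real \<alpha> * w,
       (\<lambda>j. if j < n then (\<Sum>l<n. R l j * z l) else 0)))"

definition g_trans :: "nat \<Rightarrow> real^'m \<Rightarrow> (nat \<Rightarrow> complex^'m) \<Rightarrow> 'm \<Rightarrow>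
    complex \<times> (nat \<Rightarrow> complex) \<Rightarrow> complex \<times> (nat \<Rightarrow> complex)" where
  "g_trans n a b i = (\<lambda>(w, z). (w + complex_of_real (a $ i),
       (\<lambda>j. if j < n then z j + b j $ i else 0)))"

definition G_M :: "nat \<Rightarrow> real \<Rightarrow> (nat \<Rightarrow> nat \<Rightarrow> complex) \<Rightarrow> real^'m \<Rightarrow> (nat \<Rightarrow> complex^'m) \<Rightarrow>
    (complex \<times> (nat \<Rightarrow> complex) \<Rightarrow> complex \<times> (nat \<Rightarrow> complex)) monoid" where
  "G_M n \<alpha> R a b =
     (let S = HC_domain n;
          gens = insert (restrict (g_zero n \<alpha> R) S) ((\<lambda>i. restrict (g_trans n a b i) S) ` UNIV)
      in (BijGroup S)\<lparr>carrier := generate (BijGroup S) gens\<rparr>)"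

definition mat_zpow_act :: "int^'m^'m \<Rightarrow> int \<Rightarrow> int^'m \<Rightarrow> int^'m" where
  "mat_zpow_act A k = (if k \<ge> 0 then ((\<lambda>v. A *v v) ^^ nat k)
                        else ((\<lambda>v. matrix_inv A *v v) ^^ nat (- k)))"

definition semidirect_Z :: "int^'m^'m \<Rightarrow> (int \<times> (int^'m)) monoid" where
  "semidirect_Z M = \<lparr>carrier = UNIV,
      mult = (\<lambda>(k, v) (l, w). (k + l, v + mat_zpow_act (transpose M) k w)),
      one = (0, 0)\<rparr>"

end

theory Submission
  imports Defs
begin

definition NN :: "'a::field^'m^'m \<Rightarrow> 'a \<Rightarrow> 'a^'m \<Rightarrow> 'a^'m" where
  "NN C \<beta> v = C *v v - \<beta> *s v"

lemma NN_lin: "Vector_Spaces.linear (*s) (*s) (NN C \<beta>)"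
  unfolding NN_def
  by (intro vec.linear_compose_sub vec.linear_compose_scale_right matrix_vector_mul_linear_gen vec.linear_ident)

lemma NN_pow_lin: "Vector_Spaces.linear (*s) (*s) (NN C \<beta> ^^ k)"
proof (induction k)
  case 0 then show ?case by (simp add: vec.linear_id[unfolded id_def])
next
  case (Suc k) then show ?case
    using Vector_Spaces.linear_compose[OF Suc.IH NN_lin[of C \<beta>]] by (simp add: o_def)
qed

lemma NN_comm: "NN C \<beta> (NN C \<gamma> v) = NN C \<gamma> (NN C \<beta> v)"
  by (simp add: NN_def vec.diff vec.scale vec_eq_iff algebra_simps)

lemma NN_comm_pow1: "NN C \<beta> ((NN C \<gamma> ^^ j) v) = (NN C \<gamma> ^^ j) (NN C \<beta> v)"
proof (induction j)
  case 0 then show ?case by simp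
next
  case (Suc j)
  have "NN C \<beta> ((NN C \<gamma> ^^ Suc j) v) = NN C \<beta> (NN C \<gamma> ((NN C \<gamma> ^^ j) v))" by simp
  also have "\<dots> = NN C \<gamma> (NN C \<beta> ((NN C \<gamma> ^^ j) v))" by (rule NN_comm)
  also have "\<dots> = (NN C \<gamma> ^^ Suc j) (NN C \<beta> v)" using Suc by simp
  finally show ?case .
qed

lemma NN_comm_pow: "(NN C \<beta> ^^ k) ((NN C \<gamma> ^^ j) v) = (NN C \<gamma> ^^ j) ((NN C \<beta> ^^ k) v)"
  by (induction k) (auto simp: NN_comm_pow1)

definition GE :: "'a::field^'m^'m \<Rightarrow> 'a \<Rightarrow> ('a^'m) set" where
  "GE C \<beta> = {v. \<exists>k. (NN C \<beta> ^^ k) v = 0}"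

lemma GE_inv: "v \<in> GE C \<beta> \<Longrightarrow> (NN C \<gamma> ^^ j) v \<in> GE C \<beta>"
proof -
  assume "v \<in> GE C \<beta>"
  then obtain k where k: "(NN C \<beta> ^^ k) v = 0" unfolding GE_def by blast
  have "(NN C \<beta> ^^ k) ((NN C \<gamma> ^^ j) v) = (NN C \<gamma> ^^ j) ((NN C \<beta> ^^ k) v)" by (rule NN_comm_pow)
  also have "\<dots> = 0" by (simp only: k vec.linear_0[OF NN_pow_lin])
  finally show ?thesis unfolding GE_def by blast
qed

lemma NN_eig_pow: "NN C \<gamma> v = 0 \<Longrightarrow> (NN C \<beta> ^^ k) v = (\<gamma> - \<beta>)^k *s v"
proof (induction k)
  case 0 then show ?case by simp
next
  case (Suc k)
  have e: "C *v v = \<gamma> *s v" using Suc.prems by (simp add: NN_def)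
  have "(NN C \<beta> ^^ Suc k) v = NN C \<beta> ((\<gamma> - \<beta>)^k *s v)" using Suc.IH Suc.prems by simp
  also have "\<dots> = (\<gamma> - \<beta>)^Suc k *s v" 
  proof -
    have "NN C \<beta> ((\<gamma> - \<beta>)^k *s v) = (\<gamma> - \<beta>)^k *s (\<gamma> *s v) - \<beta> *s ((\<gamma> - \<beta>)^k *s v)"
      by (simp add: NN_def vec.scale e)
    also have "\<dots> = ((\<gamma> - \<beta>)^k * \<gamma> - \<beta> * (\<gamma> - \<beta>)^k) *s v"
      by (simp add: vector_smult_assoc vector_sub_rdistrib)
    also have "(\<gamma> - \<beta>)^k * \<gamma> - \<beta> * (\<gamma> - \<beta>)^k = (\<gamma> - \<beta>)^Suc k"
      by (simp add: left_diff_distrib)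
    finally show ?thesis .
  qed
  finally show ?case .
qed

lemma GE_NN_inj1: "v \<in> GE C \<beta> \<Longrightarrow> \<beta> \<noteq> \<gamma> \<Longrightarrow> NN C \<gamma> v = 0 \<Longrightarrow> v = 0"
proof -
  assume "v \<in> GE C \<beta>" "\<beta> \<noteq> \<gamma>" "NN C \<gamma> v = 0"
  then obtain k where "(NN C \<beta> ^^ k) v = 0" unfolding GE_def by auto
  then have "(\<gamma> - \<beta>)^k *s v = 0" using NN_eig_pow[OF \<open>NN C \<gamma> v = 0\<close>, where \<beta>=\<beta> and k=k] by simp
  then show "v = 0" using \<open>\<beta> \<noteq> \<gamma>\<close> vector_mul_eq_0 by auto
qed

lemma GE_NN_inj: "v \<in> GE C \<beta> \<Longrightarrow> \<beta> \<noteq> \<gamma> \<Longrightarrow> (NN C \<gamma> ^^ j) v = 0 \<Longrightarrow> v = 0"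
proof (induction j arbitrary: v)
  case 0 then show ?case by simp
next
  case (Suc j)
  have h1: "NN C \<gamma> v \<in> GE C \<beta>" using GE_inv[OF Suc.prems(1), where j=1 and \<gamma>=\<gamma>] by simp
  have h2: "(NN C \<gamma> ^^ j) (NN C \<gamma> v) = 0" using Suc.prems(3) by (simp add: funpow_swap1)
  have "NN C \<gamma> v = 0" using Suc.IH[OF h1 Suc.prems(2) h2] .
  then show ?case by (rule GE_NN_inj1[OF Suc.prems(1,2)])
qed

lemma GE_indep:
  assumes "finite B" "\<forall>\<beta>\<in>B. f \<beta> \<in> GE C \<beta>" "(\<Sum>\<beta>\<in>B. f \<beta>) = 0"
  shows "\<forall>\<beta>\<in>B. f \<beta> = 0"
  using assms
proof (induction B arbitrary: f rule: finite_induct)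
  case empty then show ?case by simp
next
  case (insert \<beta>0 B)
  have "f \<beta>0 \<in> GE C \<beta>0" using insert.prems(1) by simp
  then obtain k where k: "(NN C \<beta>0 ^^ k) (f \<beta>0) = 0" unfolding GE_def by blast
  have "(NN C \<beta>0 ^^ k) (\<Sum>\<beta>\<in>insert \<beta>0 B. f \<beta>) = 0"
    by (simp only: insert.prems(2) vec.linear_0[OF NN_pow_lin])
  then have "(NN C \<beta>0 ^^ k) (f \<beta>0) + (\<Sum>\<beta>\<in>B. (NN C \<beta>0 ^^ k) (f \<beta>)) = 0"
    by (simp only: sum.insert[OF insert.hyps(1,2)] vec.linear_sum[OF NN_pow_lin] vec.linear_add[OF NN_pow_lin])
  then have hs: "(\<Sum>\<beta>\<in>B. (NN C \<beta>0 ^^ k) (f \<beta>)) = 0" by (simp only: k add_0_left)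
  have hg: "\<forall>\<beta>\<in>B. (NN C \<beta>0 ^^ k) (f \<beta>) \<in> GE C \<beta>" using insert.prems(1) GE_inv by blast
  have h: "\<forall>\<beta>\<in>B. (NN C \<beta>0 ^^ k) (f \<beta>) = 0"
    by (rule insert.IH[of "\<lambda>\<beta>. (NN C \<beta>0 ^^ k) (f \<beta>)", OF hg hs])
  have z: "\<forall>\<beta>\<in>B. f \<beta> = 0"
  proof
    fix \<beta> assume b: "\<beta> \<in> B"
    then have ne: "\<beta> \<noteq> \<beta>0" using insert.hyps(2) by auto
    have g: "f \<beta> \<in> GE C \<beta>" using b insert.prems(1) by simp
    have "(NN C \<beta>0 ^^ k) (f \<beta>) = 0" using h b by blast
    then show "f \<beta> = 0" by (rule GE_NN_inj[OF g ne])
  qed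
  then have "sum f B = 0" by simp
  moreover have "f \<beta>0 + sum f B = 0" using insert.prems(2) by (simp only: sum.insert[OF insert.hyps(1,2)])
  ultimately have "f \<beta>0 = 0" by simp
  then show ?case using z by blast
qed



lemma cplx_mat_mult: "cplx_mat (A ** B) = cplx_mat A ** cplx_mat (B::int^'m^'m)"
  by (simp add: cplx_mat_def matrix_matrix_mult_def vec_eq_iff)

lemma cplx_mat_one: "cplx_mat (mat 1 :: int^'m^'m) = mat 1"
  by (simp add: cplx_mat_def mat_def vec_eq_iff)

lemma cplx_mat_inj: "cplx_mat A = cplx_mat B \<Longrightarrow> A = (B::int^'m^'m)"
  by (simp add: cplx_mat_def vec_eq_iff)

lemma det_of_int_mat: "det (\<chi> i j. (of_int (A$i$j) :: 'a::comm_ring_1)) = of_int (det (A::int^'m^'m))"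
  by (simp add: det_def of_int_sum of_int_mult of_int_prod)

lemma det_cplx_mat: "det (cplx_mat A) = of_int (det A)"
  unfolding cplx_mat_def by (rule det_of_int_mat)

lemma int_inverse_exists:
  fixes A :: "int^'m^'m"
  assumes "det A = 1"
  shows "\<exists>B. A ** B = mat 1 \<and> B ** A = mat 1"
proof -
  let ?C = "cplx_mat A"
  have "det ?C = 1" using assms by (simp add: det_cplx_mat)
  then have "invertible ?C" by (simp add: invertible_det_nz)
  then obtain D where D: "?C ** D = mat 1" "D ** ?C = mat 1"
    unfolding invertible_def by blast
  define B :: "int^'m^'m" where
    "B = (\<chi> k j. det (\<chi> i l. if l = k then (if i = j then 1 else 0) else A$i$l))"
  have "cplx_mat B = D"
  proof -
    have "cplx_mat B $ k $ j = D $ k $ j" for k j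
    proof -
      let ?x = "column j D"
      have Cx: "?C *v ?x = (\<chi> i. if i = j then 1 else 0)"
        using D(1) by (simp add: vec_eq_iff matrix_matrix_mult_def matrix_vector_mult_def column_def mat_def)
      have "det (\<chi> i l. if l = k then (?C *v ?x)$i else ?C$i$l) = ?x$k * det ?C"
        by (rule cramer_lemma)
      moreover have "(\<chi> i l. if l = k then (?C *v ?x)$i else ?C$i$l) =
          (\<chi> i l. (of_int ((if l = k then (if i = j then 1 else 0) else A$i$l)) :: complex))"
        unfolding Cx by (simp add: vec_eq_iff cplx_mat_def)
      ultimately show ?thesis
        using \<open>det ?C = 1\<close> det_of_int_mat[of "(\<chi> i l. if l = k then (if i = j then 1 else 0) else A$i$l)", where 'a=complex]
        by (simp add: B_def cplx_mat_def column_def)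
    qed
    then show ?thesis by (simp add: vec_eq_iff)
  qed
  then have "cplx_mat (A ** B) = cplx_mat (mat 1)" "cplx_mat (B ** A) = cplx_mat (mat 1)"
    using D by (simp_all add: cplx_mat_mult cplx_mat_one)
  then show ?thesis using cplx_mat_inj by blast
qed


lemma sum_split_add: "(\<Sum>i<n+(m::nat). g i) = (\<Sum>i<n. g i) + (\<Sum>i<m. g (n+i))"
  by (induction m) (simp_all add: add.assoc)

definition vconj :: "complex^'m \<Rightarrow> complex^'m" where
  "vconj v = (\<chi> i. cnj (v$i))"

lemma vconj_0[simp]: "vconj 0 = 0" by (simp add: vconj_def vec_eq_iff)
lemma vconj_vconj[simp]: "vconj (vconj v) = v" by (simp add: vconj_def vec_eq_iff)
lemma vconj_eq_0[simp]: "vconj v = 0 \<longleftrightarrow> v = 0"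
  by (metis vconj_0 vconj_vconj)
lemma vconj_sum: "vconj (sum f A) = (\<Sum>x\<in>A. vconj (f x))"
  by (induction A rule: infinite_finite_induct) (simp_all add: vconj_def vec_eq_iff)
lemma vconj_scale: "vconj (c *s v) = cnj c *s vconj v"
  by (simp add: vconj_def vec_eq_iff)

lemma NN_cplx_conj: "NN (cplx_mat M) (cnj \<beta>) (vconj v) = vconj (NN (cplx_mat M) \<beta> v)"
  by (simp add: NN_def vconj_def vec_eq_iff matrix_vector_mult_def cplx_mat_def cnj_sum)

lemma NN_cplx_conj_pow: "(NN (cplx_mat M) (cnj \<beta>) ^^ k) (vconj v) = vconj ((NN (cplx_mat M) \<beta> ^^ k) v)"
  by (induction k) (simp_all add: NN_cplx_conj)

lemma GE_conj: "v \<in> GE (cplx_mat M) \<beta> \<Longrightarrow> vconj v \<in> GE (cplx_mat M) (cnj \<beta>)"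
proof -
  assume "v \<in> GE (cplx_mat M) \<beta>"
  then obtain k where k: "(NN (cplx_mat M) \<beta> ^^ k) v = 0" unfolding GE_def by blast
  have "(NN (cplx_mat M) (cnj \<beta>) ^^ k) (vconj v) = 0" by (simp only: NN_cplx_conj_pow k vconj_0)
  then show ?thesis unfolding GE_def by blast
qed

lemma GE_zero: "0 \<in> GE C \<beta>"
  unfolding GE_def by (rule CollectI, rule exI[of _ 0]) simp

lemma GE_pow_mono: "(NN C \<beta> ^^ k) v = 0 \<Longrightarrow> (NN C \<beta> ^^ (j + k)) v = 0"
  by (simp add: funpow_add vec.linear_0[OF NN_pow_lin])

lemma GE_add: "v \<in> GE C \<beta> \<Longrightarrow> w \<in> GE C \<beta> \<Longrightarrow> v + w \<in> GE C \<beta>"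
proof -
  assume "v \<in> GE C \<beta>" "w \<in> GE C \<beta>"
  then obtain k l where k: "(NN C \<beta> ^^ k) v = 0" and l: "(NN C \<beta> ^^ l) w = 0" unfolding GE_def by blast
  have "(NN C \<beta> ^^ (l + k)) v = 0" by (rule GE_pow_mono[OF k])
  moreover have "(NN C \<beta> ^^ (k + l)) w = 0" by (rule GE_pow_mono[OF l])
  ultimately have "(NN C \<beta> ^^ (k + l)) (v + w) = 0"
    by (simp add: vec.linear_add[OF NN_pow_lin] add.commute)
  then show ?thesis unfolding GE_def by blast
qed

lemma GE_scale: "v \<in> GE C \<beta> \<Longrightarrow> c *s v \<in> GE C \<beta>"
proof -
  assume "v \<in> GE C \<beta>"
  then obtain k where k: "(NN C \<beta> ^^ k) v = 0" unfolding GE_def by blast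
  have "(NN C \<beta> ^^ k) (c *s v) = c *s (NN C \<beta> ^^ k) v"
    by (rule vec.linear_scale[OF NN_pow_lin])
  then have "(NN C \<beta> ^^ k) (c *s v) = 0" using k by simp
  then show ?thesis unfolding GE_def by blast
qed

lemma gen_eigenspace_GE: "gen_eigenspace M \<beta> = GE (cplx_mat M) \<beta>"
proof -
  have "(\<lambda>x. cplx_mat M *v x - \<beta> *s x) = NN (cplx_mat M) \<beta>" by (simp add: fun_eq_iff NN_def)
  then show ?thesis unfolding gen_eigenspace_def GE_def by simp
qed

lemma W_zero: "0 \<in> W_space M"
  unfolding W_space_def by (rule CollectI, rule exI[of _ "{}"], auto)

lemma W_add: assumes "v \<in> W_space M" "w \<in> W_space M" shows "v + w \<in> W_space M"
proof -
  obtain B f where B: "finite B" "\<forall>\<beta>\<in>B. is_eigenvalue_c M \<beta> \<and> Im \<beta> > 0 \<and> f \<beta> \<in> gen_eigenspace M \<beta>" "v = sum f B"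
    using assms(1) unfolding W_space_def by blast
  obtain B' g where B': "finite B'" "\<forall>\<beta>\<in>B'. is_eigenvalue_c M \<beta> \<and> Im \<beta> > 0 \<and> g \<beta> \<in> gen_eigenspace M \<beta>" "w = sum g B'"
    using assms(2) unfolding W_space_def by blast
  define h where "h \<beta> = (if \<beta> \<in> B then f \<beta> else 0) + (if \<beta> \<in> B' then g \<beta> else 0)" for \<beta>
  have fin: "finite (B \<union> B')" using B B' by simp
  have "sum h (B \<union> B') = sum f ((B \<union> B') \<inter> B) + sum g ((B \<union> B') \<inter> B')"
    unfolding h_def sum.distrib sum.inter_restrict[OF fin] ..
  also have "\<dots> = v + w" using B(3) B'(3) by (simp add: Int_absorb1)
  finally have "v + w = sum h (B \<union> B')" ..
  moreover have "\<forall>\<beta>\<in>B \<union> B'. is_eigenvalue_c M \<beta> \<and> Im \<beta> > 0 \<and> h \<beta> \<in> gen_eigenspace M \<beta>"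
  proof
    fix \<beta> assume b: "\<beta> \<in> B \<union> B'"
    have 1: "is_eigenvalue_c M \<beta> \<and> Im \<beta> > 0" using b B(2) B'(2) by blast
    have 2: "(if \<beta> \<in> B then f \<beta> else 0) \<in> GE (cplx_mat M) \<beta>"
    proof (cases "\<beta> \<in> B")
      case True then show ?thesis using B(2) unfolding gen_eigenspace_GE by simp
    next
      case False then show ?thesis by (simp add: GE_zero)
    qed
    have 3: "(if \<beta> \<in> B' then g \<beta> else 0) \<in> GE (cplx_mat M) \<beta>"
    proof (cases "\<beta> \<in> B'")
      case True then show ?thesis using B'(2) unfolding gen_eigenspace_GE by simp
    next
      case False then show ?thesis by (simp add: GE_zero)
    qed
    show "is_eigenvalue_c M \<beta> \<and> Im \<beta> > 0 \<and> h \<beta> \<in> gen_eigenspace M \<beta>"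
      using 1 GE_add[OF 2 3] unfolding gen_eigenspace_GE h_def by blast
  qed
  ultimately show ?thesis unfolding W_space_def mem_Collect_eq
    by (intro exI[of _ "B \<union> B'"] exI[of _ h] conjI fin)
qed

lemma W_scale: assumes "v \<in> W_space M" shows "c *s v \<in> W_space M"
proof -
  obtain B f where B: "finite B" "\<forall>\<beta>\<in>B. is_eigenvalue_c M \<beta> \<and> Im \<beta> > 0 \<and> f \<beta> \<in> gen_eigenspace M \<beta>" "v = sum f B"
    using assms(1) unfolding W_space_def by blast
  have "c *s v = (\<Sum>\<beta>\<in>B. c *s f \<beta>)" using B(3) by (simp add: vec.scale_sum_right)
  moreover have "\<forall>\<beta>\<in>B. is_eigenvalue_c M \<beta> \<and> Im \<beta> > 0 \<and> c *s f \<beta> \<in> gen_eigenspace M \<beta>"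
    using B(2) GE_scale unfolding gen_eigenspace_GE by blast
  ultimately show ?thesis unfolding W_space_def mem_Collect_eq
    by (intro exI[of _ "B"] exI[of _ "\<lambda>\<beta>. c *s f \<beta>"] conjI B(1))
qed

lemma W_sum: "(\<And>j. j \<in> A \<Longrightarrow> g j \<in> W_space M) \<Longrightarrow> sum g A \<in> W_space M"
proof (induction A rule: infinite_finite_induct)
  case (infinite A) then show ?case using W_zero by simp
next
  case empty then show ?case using W_zero by simp
next
  case (insert x F)
  have "g x \<in> W_space M" using insert.prems by simp
  moreover have "sum g F \<in> W_space M" using insert.IH insert.prems by simp
  ultimately show ?case using W_add insert.hyps by simp
qed



locale pset =
  fixes n :: nat and M :: "int^'m^'m" and \<alpha> :: real and a :: "real^'m"
    and b :: "nat \<Rightarrow> complex^'m" and R :: "nat \<Rightarrow> nat \<Rightarrow> complex"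
  assumes dim: "CARD('m) = 2 * n + 1"
    and detM: "det M = 1"
    and alpha_pos: "\<alpha> > 0" and alpha_ne1: "\<alpha> \<noteq> 1"
    and a_ne: "a \<noteq> 0" and a_eig: "real_mat M *v a = \<alpha> *\<^sub>R a"
    and b_in: "\<And>j. j < n \<Longrightarrow> b j \<in> W_space M"
    and b_indep: "\<And>c. (\<Sum>j<n. c j *s b j) = 0 \<Longrightarrow> \<forall>j<n. c j = 0"
    and R_def: "\<And>j. j < n \<Longrightarrow> cplx_mat M *v b j = (\<Sum>l<n. R l j *s b l)"
begin

definition ac :: "complex^'m" where "ac = (\<chi> i. complex_of_real (a$i))"

lemma ac_ne: "ac \<noteq> 0"
  using a_ne by (simp add: ac_def vec_eq_iff)

lemma ac_GE: "ac \<in> GE (cplx_mat M) (complex_of_real \<alpha>)"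
proof -
  have h: "(\<Sum>j\<in>UNIV. real_of_int (M$i$j) * a$j) = \<alpha> * a$i" for i
    using a_eig by (simp add: vec_eq_iff real_mat_def matrix_vector_mult_def)
  have "(cplx_mat M *v ac)$i = complex_of_real (\<Sum>j\<in>UNIV. real_of_int (M$i$j) * a$j)" for i
    by (simp add: cplx_mat_def matrix_vector_mult_def ac_def of_real_sum)
  then have "NN (cplx_mat M) (complex_of_real \<alpha>) ac = 0"
    by (simp add: NN_def vec_eq_iff h ac_def)
  then have "(NN (cplx_mat M) (complex_of_real \<alpha>) ^^ 1) ac = 0" by simp
  then show ?thesis unfolding GE_def by blast
qed

definition fam :: "nat \<Rightarrow> complex^'m" where
  "fam i = (if i = 0 then ac else if i \<le> n then b (i - 1) else vconj (b (i - 1 - n)))"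

lemma fam_indep:
  assumes "(\<Sum>i<2*n+1. c i *s fam i) = 0"
  shows "\<forall>i<2*n+1. c i = 0"
proof -
  define w1 where "w1 = (\<Sum>j<n. c (Suc j) *s b j)"
  define w2 where "w2 = (\<Sum>j<n. cnj (c (Suc (n+j))) *s b j)"
  have "(\<Sum>i<2*n+1. c i *s fam i) = (\<Sum>i<Suc (n+n). c i *s fam i)"
    by (simp add: mult_2)
  also have "\<dots> = c 0 *s fam 0 + (\<Sum>i<n+n. c (Suc i) *s fam (Suc i))"
    by (rule sum.lessThan_Suc_shift)
  also have "\<dots> = c 0 *s ac + ((\<Sum>j<n. c (Suc j) *s fam (Suc j)) + (\<Sum>j<n. c (Suc (n+j)) *s fam (Suc (n+j))))"
    by (simp add: sum_split_add fam_def)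
  also have "(\<Sum>j<n. c (Suc j) *s fam (Suc j)) = w1"
    unfolding w1_def by (rule sum.cong) (auto simp: fam_def)
  also have "(\<Sum>j<n. c (Suc (n+j)) *s fam (Suc (n+j))) = vconj w2"
    unfolding w2_def vconj_sum vconj_scale by (rule sum.cong) (auto simp: fam_def)
  finally have tot: "c 0 *s ac + (w1 + vconj w2) = 0" using assms by simp
  have "w1 \<in> W_space M" unfolding w1_def by (rule W_sum) (simp add: W_scale b_in)
  then obtain B1 f1 where B1: "finite B1" "\<forall>\<beta>\<in>B1. is_eigenvalue_c M \<beta> \<and> Im \<beta> > 0 \<and> f1 \<beta> \<in> GE (cplx_mat M) \<beta>" "w1 = sum f1 B1"
    unfolding W_space_def gen_eigenspace_GE by blast
  have "w2 \<in> W_space M" unfolding w2_def by (rule W_sum) (simp add: W_scale b_in)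
  then obtain B2 f2 where B2: "finite B2" "\<forall>\<beta>\<in>B2. is_eigenvalue_c M \<beta> \<and> Im \<beta> > 0 \<and> f2 \<beta> \<in> GE (cplx_mat M) \<beta>" "w2 = sum f2 B2"
    unfolding W_space_def gen_eigenspace_GE by blast
  define al where "al = complex_of_real \<alpha>"
  define h where "h \<gamma> = (if \<gamma> = al then c 0 *s ac else if \<gamma> \<in> B1 then f1 \<gamma> else vconj (f2 (cnj \<gamma>)))" for \<gamma>
  have imB1: "\<gamma> \<in> B1 \<Longrightarrow> Im \<gamma> > 0" for \<gamma> using B1(2) by blast
  have imB2: "\<gamma> \<in> cnj ` B2 \<Longrightarrow> Im \<gamma> < 0" for \<gamma> using B2(2) by auto
  have "Im al = 0" by (simp add: al_def)
  then have al_notin: "al \<notin> B1 \<union> cnj ` B2" using imB1[of al] imB2[of al] by auto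
  have "\<gamma> \<notin> B1 \<inter> cnj ` B2" for \<gamma> using imB1[of \<gamma>] imB2[of \<gamma>] by auto
  then have disj: "B1 \<inter> cnj ` B2 = {}" by blast
  have finB: "finite (B1 \<union> cnj ` B2)" using B1(1) B2(1) by simp
  have s1: "sum h B1 = w1" unfolding B1(3) h_def
    by (rule sum.cong) (use al_notin in auto)
  have "sum h (cnj ` B2) = sum (h \<circ> cnj) B2"
    by (rule sum.reindex) (simp add: inj_on_def)
  also have "\<dots> = (\<Sum>\<beta>\<in>B2. vconj (f2 \<beta>))"
  proof (rule sum.cong)
    fix \<beta> assume "\<beta> \<in> B2"
    then have "cnj \<beta> \<noteq> al" "cnj \<beta> \<notin> B1" using al_notin disj by auto
    then show "(h \<circ> cnj) \<beta> = vconj (f2 \<beta>)" by (simp add: h_def)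
  qed simp
  also have "\<dots> = vconj w2" by (simp add: B2(3) vconj_sum)
  finally have s2: "sum h (cnj ` B2) = vconj w2" .
  have "sum h (insert al (B1 \<union> cnj ` B2)) = h al + (sum h B1 + sum h (cnj ` B2))"
    using al_notin finB B1(1) B2(1) disj by (simp add: sum.union_disjoint)
  also have "\<dots> = 0" using tot s1 s2 by (simp add: h_def)
  finally have sum0: "sum h (insert al (B1 \<union> cnj ` B2)) = 0" .
  have hGE: "\<forall>\<gamma>\<in>insert al (B1 \<union> cnj ` B2). h \<gamma> \<in> GE (cplx_mat M) \<gamma>"
  proof
    fix \<gamma> assume g: "\<gamma> \<in> insert al (B1 \<union> cnj ` B2)"
    show "h \<gamma> \<in> GE (cplx_mat M) \<gamma>"
    proof (cases "\<gamma> = al")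
      case True then show ?thesis using ac_GE GE_scale unfolding h_def al_def by simp
    next
      case False
      show ?thesis
      proof (cases "\<gamma> \<in> B1")
        case True then show ?thesis using False B1(2) unfolding h_def by simp
      next
        case F2: False
        then obtain \<beta> where bb: "\<beta> \<in> B2" "\<gamma> = cnj \<beta>" using g False by auto
        then have "f2 \<beta> \<in> GE (cplx_mat M) \<beta>" using B2(2) by blast
        then have "vconj (f2 \<beta>) \<in> GE (cplx_mat M) (cnj \<beta>)" by (rule GE_conj)
        then show ?thesis using False F2 bb unfolding h_def by simp
      qed
    qed
  qed
  have hz: "\<forall>\<gamma>\<in>insert al (B1 \<union> cnj ` B2). h \<gamma> = 0"
    by (rule GE_indep[OF _ hGE sum0]) (use finB in simp)
  then have "c 0 *s ac = 0" unfolding h_def by simp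
  then have c0: "c 0 = 0" using ac_ne by (simp add: vector_mul_eq_0)
  have "w1 = 0" using hz s1 by (metis UnCI insertCI sum.neutral)
  then have c1: "\<forall>j<n. c (Suc j) = 0" using b_indep[of "\<lambda>j. c (Suc j)"] unfolding w1_def by blast
  have "vconj w2 = 0" using hz s2 by (metis UnCI insertCI sum.neutral)
  then have "w2 = 0" by simp
  then have c2: "\<forall>j<n. c (Suc (n+j)) = 0" using b_indep[of "\<lambda>j. cnj (c (Suc (n+j)))"] unfolding w2_def by simp
  show ?thesis
  proof (intro allI impI)
    fix i assume i: "i < 2*n+1"
    show "c i = 0"
    proof (cases "i = 0")
      case True then show ?thesis using c0 by simp
    next
      case False
      then obtain k where k: "i = Suc k" by (cases i) auto
      show ?thesis
      proof (cases "k < n")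
        case True then show ?thesis using c1 k by simp
      next
        case False
        then have "k = n + (k - n)" "k - n < n" using i k by auto
        then show ?thesis using c2 k by metis
      qed
    qed
  qed
qed

end


context pset begin

definition ee :: "nat \<Rightarrow> 'm" where "ee = (SOME e. bij_betw e {..<2*n+1} (UNIV::'m set))"
definition idx :: "'m \<Rightarrow> nat" where "idx p = inv_into {..<2*n+1} ee p"

lemma ee_bij: "bij_betw ee {..<2*n+1} (UNIV::'m set)"
proof -
  obtain e where "bij_betw e {0..<card (UNIV::'m set)} (UNIV::'m set)"
    using ex_bij_betw_nat_finite[of "UNIV::'m set"] by auto
  then have "bij_betw e {..<2*n+1} (UNIV::'m set)" using dim by (simp add: atLeast0LessThan)
  then show ?thesis unfolding ee_def by (rule someI[where P="\<lambda>e. bij_betw e {..<2*n+1} (UNIV::'m set)"])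
qed

lemma idx_lt: "idx p < 2*n+1"
  unfolding idx_def using ee_bij by (metis bij_betw_def inv_into_into iso_tuple_UNIV_I lessThan_iff)

lemma ee_idx[simp]: "ee (idx p) = p"
  unfolding idx_def using ee_bij by (simp add: bij_betw_def f_inv_into_f)

lemma idx_ee[simp]: "i < 2*n+1 \<Longrightarrow> idx (ee i) = i"
  unfolding idx_def using ee_bij by (simp add: bij_betw_def inv_into_f_f)

lemma sum_UNIV_ee: "(\<Sum>q\<in>UNIV. g q) = (\<Sum>i<2*n+1. g (ee i))"
  using sum.reindex_bij_betw[OF ee_bij, of g] by simp

lemma u_indep:
  fixes v :: "int^'m"
  assumes va: "(\<Sum>i\<in>UNIV. real_of_int (v$i) * a$i) = 0"
    and vb: "\<forall>j<n. (\<Sum>i\<in>UNIV. complex_of_int (v$i) * b j $ i) = 0"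
  shows "v = 0"
proof -
  define F :: "complex^'m^'m" where "F = (\<chi> p. fam (idx p))"
  have rows: "\<forall>c. (\<Sum>p\<in>UNIV. c p *s row p F) = 0 \<longrightarrow> (\<forall>p. c p = 0)"
  proof (intro allI impI)
    fix c :: "'m \<Rightarrow> complex" and p
    assume h: "(\<Sum>p\<in>UNIV. c p *s row p F) = 0"
    have rq: "row q F = fam (idx q)" for q by (simp add: row_def F_def vec_eq_iff)
    have "(\<Sum>i<2*n+1. c (ee i) *s fam i) = (\<Sum>i<2*n+1. c (ee i) *s row (ee i) F)"
      by (rule sum.cong) (simp_all add: rq)
    also have "\<dots> = 0" using h unfolding sum_UNIV_ee .
    finally have "(\<Sum>i<2*n+1. c (ee i) *s fam i) = 0" .
    then have "\<forall>i<2*n+1. c (ee i) = 0" by (rule fam_indep)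
    then show "c p = 0" using idx_lt[of p] by (metis ee_idx)
  qed
  then obtain B where "F ** B = mat 1" using matrix_right_invertible_independent_rows by blast
  then have "B ** F = mat 1" using matrix_left_right_inverse by blast
  then have inj: "inj ((*v) F)" using matrix_left_invertible_injective by blast
  define x :: "complex^'m" where "x = (\<chi> i. complex_of_int (v$i))"
  have "(\<Sum>i\<in>UNIV. fam k $ i * x $ i) = 0" if k: "k < 2*n+1" for k
  proof (cases "k = 0")
    case True
    have "(\<Sum>i\<in>UNIV. fam k $ i * x $ i) = complex_of_real (\<Sum>i\<in>UNIV. real_of_int (v$i) * a$i)"
      using True by (simp add: fam_def ac_def x_def of_real_sum mult.commute)
    then show ?thesis using va by simp
  next
    case False
    show ?thesis
    proof (cases "k \<le> n")
      case True
      then have "k - 1 < n" using False by simp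
      have "(\<Sum>i\<in>UNIV. fam k $ i * x $ i) = (\<Sum>i\<in>UNIV. complex_of_int (v$i) * b (k - 1) $ i)"
        using True False by (simp add: fam_def x_def mult.commute)
      then show ?thesis using vb[rule_format, OF \<open>k - 1 < n\<close>] by simp
    next
      case F2: False
      then have j: "k - 1 - n < n" using k by simp
      have "(\<Sum>i\<in>UNIV. fam k $ i * x $ i) = cnj (\<Sum>i\<in>UNIV. complex_of_int (v$i) * b (k - 1 - n) $ i)"
        using False F2 by (simp add: fam_def x_def vconj_def cnj_sum mult.commute)
      then show ?thesis using vb j by simp
    qed
  qed
  then have "F *v x = 0"
    using idx_lt by (simp add: vec_eq_iff matrix_vector_mult_def F_def)
  then have "x = 0" using inj by (metis inj_eq matrix_vector_mult_0_right)
  then show "v = 0" by (simp add: x_def vec_eq_iff)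
qed

end


context pset begin

definition Q :: "complex^'m^'m" where
  "Q = (\<chi> p q. if idx p < n \<and> idx q < n then R (idx q) (idx p) else if p = q then 1 else 0)"

lemma sum_ee_restrict: "(\<Sum>q\<in>UNIV. if idx q < n then g q else 0) = (\<Sum>l<n. g (ee l))"
proof -
  have "(\<Sum>q\<in>UNIV. if idx q < n then g q else 0) = (\<Sum>i<2*n+1. if idx (ee i) < n then g (ee i) else 0)"
    by (rule sum_UNIV_ee)
  also have "\<dots> = (\<Sum>i<2*n+1. if i < n then g (ee i) else 0)"
    by (rule sum.cong) simp_all
  also have "\<dots> = (\<Sum>i\<in>{..<2*n+1} \<inter> {..<n}. g (ee i))"
    using sum.inter_restrict[of "{..<2*n+1}" "\<lambda>i. g (ee i)" "{..<n}"] by simp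
  also have "{..<2*n+1} \<inter> {..<n} = {..<n}" by auto
  finally show ?thesis .
qed

lemma Q_mult: "(Q *v x)$p = (if idx p < n then (\<Sum>l<n. R l (idx p) * x$(ee l)) else x$p)"
proof (cases "idx p < n")
  case True
  have "(Q *v x)$p = (\<Sum>q\<in>UNIV. Q$p$q * x$q)" by (simp add: matrix_vector_mult_def)
  also have "\<dots> = (\<Sum>q\<in>UNIV. if idx q < n then R (idx q) (idx p) * x$q else 0)"
    by (rule sum.cong) (auto simp: Q_def True)
  also have "\<dots> = (\<Sum>l<n. R (idx (ee l)) (idx p) * x$(ee l))" by (rule sum_ee_restrict)
  also have "\<dots> = (\<Sum>l<n. R l (idx p) * x$(ee l))" by (rule sum.cong) simp_all
  finally show ?thesis using True by simp
next
  case False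
  have "(Q *v x)$p = (\<Sum>q\<in>UNIV. Q$p$q * x$q)" by (simp add: matrix_vector_mult_def)
  also have "\<dots> = (\<Sum>q\<in>UNIV. if q = p then x$q else 0)"
    by (rule sum.cong) (auto simp: Q_def False)
  finally have "(Q *v x)$p = (\<Sum>q\<in>UNIV. if q = p then x$q else 0)" .
  then show ?thesis using False by simp
qed

lemma QT_mult: "(transpose Q *v c)$q = (if idx q < n then (\<Sum>j<n. R (idx q) j * c$(ee j)) else c$q)"
proof (cases "idx q < n")
  case True
  have "(transpose Q *v c)$q = (\<Sum>p\<in>UNIV. Q$p$q * c$p)" by (simp add: matrix_vector_mult_def transpose_def)
  also have "\<dots> = (\<Sum>p\<in>UNIV. if idx p < n then R (idx q) (idx p) * c$p else 0)"
    by (rule sum.cong) (auto simp: Q_def True)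
  also have "\<dots> = (\<Sum>l<n. R (idx q) (idx (ee l)) * c$(ee l))" by (rule sum_ee_restrict)
  also have "\<dots> = (\<Sum>l<n. R (idx q) l * c$(ee l))" by (rule sum.cong) simp_all
  finally show ?thesis using True by simp
next
  case False
  have "(transpose Q *v c)$q = (\<Sum>p\<in>UNIV. Q$p$q * c$p)" by (simp add: matrix_vector_mult_def transpose_def)
  also have "\<dots> = (\<Sum>p\<in>UNIV. if p = q then c$p else 0)"
    by (rule sum.cong) (auto simp: Q_def False)
  finally have "(transpose Q *v c)$q = (\<Sum>p\<in>UNIV. if p = q then c$p else 0)" .
  then show ?thesis using False by simp
qed

lemma C_inj: "inj ((*v) (cplx_mat M))"
proof -
  have "det (cplx_mat M) = 1" using detM by (simp add: det_cplx_mat)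
  then have "invertible (cplx_mat M)" by (simp add: invertible_det_nz)
  then show ?thesis by (rule inj_matrix_vector_mult)
qed

lemma QT_ker: "transpose Q *v c = 0 \<Longrightarrow> c = 0"
proof -
  assume h: "transpose Q *v c = 0"
  define cc where "cc j = c$(ee j)" for j
  have r: "(\<Sum>j<n. R l j * cc j) = 0" if "l < n" for l
  proof -
    have "(transpose Q *v c)$(ee l) = 0" using h by simp
    then show ?thesis using that QT_mult[of c "ee l"] by (simp add: cc_def)
  qed
  have "cplx_mat M *v (\<Sum>j<n. cc j *s b j) = (\<Sum>j<n. cc j *s (cplx_mat M *v b j))"
    by (simp add: vec.linear_sum[OF matrix_vector_mul_linear_gen] vec.scale)
  also have "\<dots> = (\<Sum>j<n. cc j *s (\<Sum>l<n. R l j *s b l))"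
    by (rule sum.cong) (simp_all add: R_def)
  also have "\<dots> = (\<Sum>j<n. \<Sum>l<n. (cc j * R l j) *s b l)"
    by (simp add: vec.scale_sum_right vector_smult_assoc)
  also have "\<dots> = (\<Sum>l<n. \<Sum>j<n. (cc j * R l j) *s b l)"
    by (rule sum.swap)
  also have "\<dots> = (\<Sum>l<n. (\<Sum>j<n. R l j * cc j) *s b l)"
    by (simp add: vec.scale_sum_left mult.commute)
  also have "\<dots> = 0" using r by simp
  finally have "cplx_mat M *v (\<Sum>j<n. cc j *s b j) = cplx_mat M *v 0" by simp
  then have "(\<Sum>j<n. cc j *s b j) = 0" using C_inj by (meson injD)
  then have z: "\<forall>j<n. cc j = 0" by (rule b_indep)
  show "c = 0"
  proof (subst vec_eq_iff, rule allI)
    fix q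
    show "c$q = 0$q"
    proof (cases "idx q < n")
      case True then show ?thesis using z by (metis cc_def ee_idx zero_index)
    next
      case False
      have "(transpose Q *v c)$q = 0" using h by simp
      then show ?thesis using False QT_mult[of c q] by simp
    qed
  qed
qed

lemma Q_inv: "\<exists>B. Q ** B = mat 1 \<and> B ** Q = mat 1"
proof -
  have "\<exists>B. B ** transpose Q = mat 1"
    using matrix_left_invertible_ker QT_ker by blast
  then obtain B where "Q ** B = mat 1" using left_invertible_transpose by blast
  then show ?thesis using matrix_left_right_inverse by blast
qed

definition zmap :: "(nat \<Rightarrow> complex) \<Rightarrow> (nat \<Rightarrow> complex)" where
  "zmap z = (\<lambda>j. if j < n then (\<Sum>l<n. R l j * z l) else 0)"

definition emb :: "(nat \<Rightarrow> complex) \<Rightarrow> complex^'m" where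
  "emb z = (\<chi> p. if idx p < n then z (idx p) else 0)"

definition supp :: "(nat \<Rightarrow> complex) set" where
  "supp = {z. \<forall>j\<ge>n. z j = 0}"

lemma Q_emb: "Q *v emb z = emb (zmap z)"
proof (subst vec_eq_iff, rule allI)
  fix p
  have "(\<Sum>l<n. R l (idx p) * emb z $ ee l) = (\<Sum>l<n. R l (idx p) * z l)"
    by (rule sum.cong) (simp_all add: emb_def)
  then show "(Q *v emb z)$p = emb (zmap z) $ p"
    by (simp add: Q_mult emb_def zmap_def)
qed

lemma emb_inj: "z \<in> supp \<Longrightarrow> z' \<in> supp \<Longrightarrow> emb z = emb z' \<Longrightarrow> z = z'"
proof
  fix l assume s: "z \<in> supp" "z' \<in> supp" and e: "emb z = emb z'"
  show "z l = z' l"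
  proof (cases "l < n")
    case True
    then have "emb z $ ee l = z l" "emb z' $ ee l = z' l" by (simp_all add: emb_def)
    then show ?thesis using e by simp
  next
    case False then show ?thesis using s by (simp add: supp_def)
  qed
qed

lemma zmap_supp: "zmap z \<in> supp" by (simp add: zmap_def supp_def)

lemma zmap_bij: "bij_betw zmap supp supp"
proof -
  obtain B where B: "Q ** B = mat 1" "B ** Q = mat 1" using Q_inv by blast
  have inj: "inj_on zmap supp"
  proof (rule inj_onI)
    fix z z' assume s: "z \<in> supp" "z' \<in> supp" and e: "zmap z = zmap z'"
    then have "Q *v emb z = Q *v emb z'" by (simp add: Q_emb)
    then have "B *v (Q *v emb z) = B *v (Q *v emb z')" by simp
    then have "emb z = emb z'" by (simp add: matrix_vector_mul_assoc B)
    then show "z = z'" using emb_inj s by blast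
  qed
  have "y \<in> zmap ` supp" if y: "y \<in> supp" for y
  proof -
    define x where "x = B *v emb y"
    have Qx: "Q *v x = emb y" by (simp add: x_def matrix_vector_mul_assoc B)
    define z where "z l = (if l < n then x$(ee l) else 0)" for l
    have zs: "z \<in> supp" by (simp add: supp_def z_def)
    have "emb z = x"
    proof (subst vec_eq_iff, rule allI)
      fix p
      show "emb z $ p = x $ p"
      proof (cases "idx p < n")
        case True then show ?thesis by (simp add: emb_def z_def)
      next
        case False
        have "(Q *v x)$p = x$p" using False by (simp add: Q_mult)
        then show ?thesis using False Qx by (simp add: emb_def)
      qed
    qed
    then have "emb (zmap z) = emb y" using Qx Q_emb by metis
    then have "zmap z = y" using emb_inj zmap_supp y by blast
    then show ?thesis using zs by blast
  qed
  then have "zmap ` supp = supp" using zmap_supp by blast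
  then show ?thesis using inj by (simp add: bij_betw_def)
qed

end


context pset begin

definition TT :: "int^'m^'m" where "TT = transpose M"

definition sa :: "int^'m \<Rightarrow> real" where "sa v = (\<Sum>i\<in>UNIV. real_of_int (v$i) * a$i)"
definition sb :: "int^'m \<Rightarrow> nat \<Rightarrow> complex" where "sb v j = (\<Sum>i\<in>UNIV. complex_of_int (v$i) * b j $ i)"

definition trf :: "int^'m \<Rightarrow> complex \<times> (nat \<Rightarrow> complex) \<Rightarrow> complex \<times> (nat \<Rightarrow> complex)" where
  "trf v = (\<lambda>(w, z). (w + complex_of_real (sa v), (\<lambda>j. if j < n then z j + sb v j else 0)))"

lemma sa_add: "sa (v + w) = sa v + sa w"
  by (simp add: sa_def sum.distrib algebra_simps)
lemma sb_add: "sb (v + w) j = sb v j + sb w j"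
  by (simp add: sb_def sum.distrib algebra_simps)
lemma sa_0: "sa 0 = 0" by (simp add: sa_def)
lemma sb_0: "sb 0 j = 0" by (simp add: sb_def)

lemma HC_mem: "(w, z) \<in> HC_domain n \<longleftrightarrow> Im w > 0 \<and> z \<in> supp"
  by (simp add: HC_domain_def supp_def)

lemma trf_in: "p \<in> HC_domain n \<Longrightarrow> trf v p \<in> HC_domain n"
  by (cases p) (simp add: trf_def HC_domain_def)

lemma trf_add: "p \<in> HC_domain n \<Longrightarrow> trf v (trf w p) = trf (v + w) p"
  by (cases p) (simp add: trf_def sa_add sb_add fun_eq_iff algebra_simps)

lemma trf_0: "p \<in> HC_domain n \<Longrightarrow> trf 0 p = p"
  by (cases p) (auto simp: trf_def sa_0 sb_0 fun_eq_iff HC_domain_def)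

lemma sa_T: "sa (TT *v w) = \<alpha> * sa w"
proof -
  have h: "(\<Sum>i\<in>UNIV. real_of_int (M$k$i) * a$i) = \<alpha> * a$k" for k
    using a_eig by (simp add: vec_eq_iff real_mat_def matrix_vector_mult_def)
  have "sa (TT *v w) = (\<Sum>i\<in>UNIV. \<Sum>k\<in>UNIV. real_of_int (w$k) * (real_of_int (M$k$i) * a$i))"
    by (simp add: sa_def TT_def matrix_vector_mult_def transpose_def sum_distrib_left sum_distrib_right mult.commute mult.left_commute)
  also have "\<dots> = (\<Sum>k\<in>UNIV. real_of_int (w$k) * (\<Sum>i\<in>UNIV. real_of_int (M$k$i) * a$i))"
    by (subst sum.swap) (simp add: sum_distrib_left)
  also have "\<dots> = \<alpha> * sa w"
    by (simp only: h) (simp add: sa_def sum_distrib_left mult.commute mult.left_commute)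
  finally show ?thesis .
qed

lemma sb_T: "j < n \<Longrightarrow> sb (TT *v w) j = (\<Sum>l<n. R l j * sb w l)"
proof -
  assume j: "j < n"
  have h: "(\<Sum>i\<in>UNIV. complex_of_int (M$k$i) * b j $ i) = (\<Sum>l<n. R l j * b l $ k)" for k
  proof -
    have "(cplx_mat M *v b j) $ k = (\<Sum>l<n. R l j *s b l) $ k" using R_def[OF j] by simp
    then show ?thesis by (simp add: cplx_mat_def matrix_vector_mult_def sum_component)
  qed
  have "sb (TT *v w) j = (\<Sum>i\<in>UNIV. \<Sum>k\<in>UNIV. complex_of_int (w$k) * (complex_of_int (M$k$i) * b j $ i))"
    by (simp add: sb_def TT_def matrix_vector_mult_def transpose_def sum_distrib_left sum_distrib_right mult.commute mult.left_commute)
  also have "\<dots> = (\<Sum>k\<in>UNIV. complex_of_int (w$k) * (\<Sum>i\<in>UNIV. complex_of_int (M$k$i) * b j $ i))"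
    by (subst sum.swap) (simp add: sum_distrib_left)
  also have "\<dots> = (\<Sum>k\<in>UNIV. \<Sum>l<n. R l j * (complex_of_int (w$k) * b l $ k))"
    by (simp only: h) (simp add: sum_distrib_left mult.commute mult.left_commute)
  also have "\<dots> = (\<Sum>l<n. R l j * sb w l)"
    by (subst sum.swap) (simp add: sb_def sum_distrib_left)
  finally show ?thesis .
qed

definition gz where "gz = g_zero n \<alpha> R"

lemma gz_eq: "gz (w, z) = (complex_of_real \<alpha> * w, zmap z)"
  by (simp add: gz_def g_zero_def zmap_def)

lemma gz_trf: "p \<in> HC_domain n \<Longrightarrow> gz (trf w p) = trf (TT *v w) (gz p)"
proof (cases p)
  case (Pair w0 z0)
  have 1: "complex_of_real \<alpha> * (w0 + complex_of_real (sa w)) = complex_of_real \<alpha> * w0 + complex_of_real (sa (TT *v w))"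
    by (simp add: sa_T algebra_simps)
  have 2: "zmap (\<lambda>j. if j < n then z0 j + sb w j else 0) = (\<lambda>j. if j < n then zmap z0 j + sb (TT *v w) j else 0)"
  proof
    fix j
    show "zmap (\<lambda>j. if j < n then z0 j + sb w j else 0) j = (if j < n then zmap z0 j + sb (TT *v w) j else 0)"
    proof (cases "j < n")
      case True
      have "(\<Sum>l<n. R l j * (if l < n then z0 l + sb w l else 0)) = (\<Sum>l<n. R l j * z0 l) + (\<Sum>l<n. R l j * sb w l)"
        by (simp add: sum.distrib[symmetric] algebra_simps)
      then show ?thesis using True by (simp add: zmap_def sb_T)
    next
      case False then show ?thesis by (simp add: zmap_def)
    qed
  qed
  show ?thesis using Pair 1 2 by (simp add: trf_def gz_eq)
qed

lemma gz_bij: "bij_betw gz (HC_domain n) (HC_domain n)"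
proof (rule bij_betw_byWitness[where f'="\<lambda>(w, z). (w / complex_of_real \<alpha>, inv_into supp zmap z)"])
  have ab: "bij_betw zmap supp supp" by (rule zmap_bij)
  have ap: "complex_of_real \<alpha> \<noteq> 0" using alpha_pos by simp
  show "\<forall>p\<in>HC_domain n. (\<lambda>(w, z). (w / complex_of_real \<alpha>, inv_into supp zmap z)) (gz p) = p"
    using ab ap by (auto simp: HC_mem gz_eq bij_betw_def)
  show "\<forall>p\<in>HC_domain n. gz ((\<lambda>(w, z). (w / complex_of_real \<alpha>, inv_into supp zmap z)) p) = p"
    using ab ap by (auto simp: HC_mem gz_eq bij_betw_def f_inv_into_f)
  show "gz ` HC_domain n \<subseteq> HC_domain n"
    using ab alpha_pos by (auto simp: HC_mem gz_eq bij_betw_def)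
  show "(\<lambda>(w, z). (w / complex_of_real \<alpha>, inv_into supp zmap z)) ` HC_domain n \<subseteq> HC_domain n"
    using ab alpha_pos by (auto simp: HC_mem bij_betw_def inv_into_into)
qed

end


context pset begin

abbreviation GG where "GG \<equiv> BijGroup (HC_domain n)"

definition tr :: "int^'m \<Rightarrow> complex \<times> (nat \<Rightarrow> complex) \<Rightarrow> complex \<times> (nat \<Rightarrow> complex)" where
  "tr v = restrict (trf v) (HC_domain n)"
definition g0 :: "complex \<times> (nat \<Rightarrow> complex) \<Rightarrow> complex \<times> (nat \<Rightarrow> complex)" where
  "g0 = restrict gz (HC_domain n)"

lemma carrier_GG: "carrier GG = Bij (HC_domain n)" by (simp add: BijGroup_def)

lemma GG_mult_eval: "f \<in> carrier GG \<Longrightarrow> g \<in> carrier GG \<Longrightarrow> p \<in> HC_domain n \<Longrightarrow> (f \<otimes>\<^bsub>GG\<^esub> g) p = f (g p)"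
  by (simp add: BijGroup_def compose_def)

lemma GG_one_eval: "p \<in> HC_domain n \<Longrightarrow> \<one>\<^bsub>GG\<^esub> p = p"
  by (simp add: BijGroup_def)

lemma GG_ext: "f \<in> carrier GG \<Longrightarrow> g \<in> carrier GG \<Longrightarrow> (\<And>p. p \<in> HC_domain n \<Longrightarrow> f p = g p) \<Longrightarrow> f = g"
  unfolding carrier_GG Bij_def by (auto intro: extensionalityI)

lemma trf_bij: "bij_betw (trf v) (HC_domain n) (HC_domain n)"
proof (rule bij_betw_byWitness[where f'="trf (-v)"])
  show "\<forall>p\<in>HC_domain n. trf (- v) (trf v p) = p" by (simp add: trf_add trf_0)
  show "\<forall>p\<in>HC_domain n. trf v (trf (- v) p) = p" by (simp add: trf_add trf_0)
  show "trf v ` HC_domain n \<subseteq> HC_domain n" using trf_in by blast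
  show "trf (-v) ` HC_domain n \<subseteq> HC_domain n" using trf_in by blast
qed

lemma tr_carrier: "tr v \<in> carrier GG"
  unfolding carrier_GG Bij_def tr_def using trf_bij by simp

lemma g0_carrier: "g0 \<in> carrier GG"
  unfolding carrier_GG Bij_def g0_def using gz_bij by simp

interpretation BG: group GG by (rule group_BijGroup)

lemma tr_mult: "tr v \<otimes>\<^bsub>GG\<^esub> tr w = tr (v + w)"
proof (rule GG_ext)
  show "tr v \<otimes>\<^bsub>GG\<^esub> tr w \<in> carrier GG" by (simp add: tr_carrier)
  show "tr (v + w) \<in> carrier GG" by (rule tr_carrier)
  fix p assume p: "p \<in> HC_domain n"
  have "(tr v \<otimes>\<^bsub>GG\<^esub> tr w) p = tr v (tr w p)" by (rule GG_mult_eval[OF tr_carrier tr_carrier p])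
  then show "(tr v \<otimes>\<^bsub>GG\<^esub> tr w) p = tr (v + w) p" using p by (simp add: tr_def trf_in trf_add)
qed

lemma tr_0: "tr 0 = \<one>\<^bsub>GG\<^esub>"
proof (rule GG_ext)
  show "tr 0 \<in> carrier GG" by (rule tr_carrier)
  show "\<one>\<^bsub>GG\<^esub> \<in> carrier GG" by simp
  fix p assume p: "p \<in> HC_domain n"
  show "tr 0 p = \<one>\<^bsub>GG\<^esub> p" using p by (simp add: tr_def trf_0 GG_one_eval)
qed

lemma tr_inv: "inv\<^bsub>GG\<^esub> (tr v) = tr (- v)"
  by (rule BG.inv_equality) (simp_all add: tr_mult tr_0 tr_carrier)

lemma gz_in: "p \<in> HC_domain n \<Longrightarrow> gz p \<in> HC_domain n"
  using gz_bij by (meson bij_betw_apply)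

lemma g0_comm: "g0 \<otimes>\<^bsub>GG\<^esub> tr w = tr (TT *v w) \<otimes>\<^bsub>GG\<^esub> g0"
proof (rule GG_ext)
  show "g0 \<otimes>\<^bsub>GG\<^esub> tr w \<in> carrier GG" by (simp add: tr_carrier g0_carrier)
  show "tr (TT *v w) \<otimes>\<^bsub>GG\<^esub> g0 \<in> carrier GG" by (simp add: tr_carrier g0_carrier)
  fix p assume p: "p \<in> HC_domain n"
  have "(g0 \<otimes>\<^bsub>GG\<^esub> tr w) p = g0 (tr w p)" by (rule GG_mult_eval[OF g0_carrier tr_carrier p])
  moreover have "(tr (TT *v w) \<otimes>\<^bsub>GG\<^esub> g0) p = tr (TT *v w) (g0 p)" by (rule GG_mult_eval[OF tr_carrier g0_carrier p])
  ultimately show "(g0 \<otimes>\<^bsub>GG\<^esub> tr w) p = (tr (TT *v w) \<otimes>\<^bsub>GG\<^esub> g0) p"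
    using p by (simp add: tr_def g0_def trf_in gz_in gz_trf)
qed

lemma TT_inv: "TT ** matrix_inv TT = mat 1 \<and> matrix_inv TT ** TT = mat 1"
proof -
  have "det TT = 1" using detM by (simp add: TT_def det_transpose)
  then have "\<exists>B. TT ** B = mat 1 \<and> B ** TT = mat 1" by (rule int_inverse_exists)
  then show ?thesis unfolding matrix_inv_def by (rule someI_ex)
qed

lemma TT_Ti_pow: "((\<lambda>v. TT *v v) ^^ m) (((\<lambda>v. matrix_inv TT *v v) ^^ m) x) = x"
proof (induction m arbitrary: x)
  case 0 then show ?case by simp
next
  case (Suc m)
  have a: "((\<lambda>v. TT *v v) ^^ Suc m) y = ((\<lambda>v. TT *v v) ^^ m) (TT *v y)" for y
    by (simp add: funpow_swap1)
  have b: "((\<lambda>v. matrix_inv TT *v v) ^^ Suc m) x = matrix_inv TT *v (((\<lambda>v. matrix_inv TT *v v) ^^ m) x)"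
    by simp
  have "((\<lambda>v. TT *v v) ^^ Suc m) (((\<lambda>v. matrix_inv TT *v v) ^^ Suc m) x)
      = ((\<lambda>v. TT *v v) ^^ m) (TT *v (matrix_inv TT *v (((\<lambda>v. matrix_inv TT *v v) ^^ m) x)))"
    by (simp only: a b)
  also have "\<dots> = ((\<lambda>v. TT *v v) ^^ m) (((\<lambda>v. matrix_inv TT *v v) ^^ m) x)"
    using TT_inv by (simp add: matrix_vector_mul_assoc)
  finally show ?case using Suc by simp
qed

lemma conj_nat: "g0 [^]\<^bsub>GG\<^esub> (m::nat) \<otimes>\<^bsub>GG\<^esub> tr w = tr (((\<lambda>v. TT *v v) ^^ m) w) \<otimes>\<^bsub>GG\<^esub> g0 [^]\<^bsub>GG\<^esub> m"
proof (induction m arbitrary: w)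
  case 0 then show ?case by (simp add: tr_carrier)
next
  case (Suc m)
  have ps: "g0 [^]\<^bsub>GG\<^esub> Suc m = g0 \<otimes>\<^bsub>GG\<^esub> g0 [^]\<^bsub>GG\<^esub> m" by (rule BG.nat_pow_Suc2[OF g0_carrier])
  have pc: "g0 [^]\<^bsub>GG\<^esub> m \<in> carrier GG" by (simp add: g0_carrier)
  have "g0 [^]\<^bsub>GG\<^esub> Suc m \<otimes>\<^bsub>GG\<^esub> tr w = g0 \<otimes>\<^bsub>GG\<^esub> (g0 [^]\<^bsub>GG\<^esub> m \<otimes>\<^bsub>GG\<^esub> tr w)"
    by (simp only: ps BG.m_assoc[OF g0_carrier pc tr_carrier])
  also have "\<dots> = g0 \<otimes>\<^bsub>GG\<^esub> (tr (((\<lambda>v. TT *v v) ^^ m) w) \<otimes>\<^bsub>GG\<^esub> g0 [^]\<^bsub>GG\<^esub> m)"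
    by (simp only: Suc)
  also have "\<dots> = (g0 \<otimes>\<^bsub>GG\<^esub> tr (((\<lambda>v. TT *v v) ^^ m) w)) \<otimes>\<^bsub>GG\<^esub> g0 [^]\<^bsub>GG\<^esub> m"
    by (simp only: BG.m_assoc[OF g0_carrier tr_carrier pc])
  also have "\<dots> = (tr (TT *v ((\<lambda>v. TT *v v) ^^ m) w) \<otimes>\<^bsub>GG\<^esub> g0) \<otimes>\<^bsub>GG\<^esub> g0 [^]\<^bsub>GG\<^esub> m"
    by (simp only: g0_comm)
  also have "\<dots> = tr (TT *v ((\<lambda>v. TT *v v) ^^ m) w) \<otimes>\<^bsub>GG\<^esub> (g0 \<otimes>\<^bsub>GG\<^esub> g0 [^]\<^bsub>GG\<^esub> m)"
    by (simp only: BG.m_assoc[OF tr_carrier g0_carrier pc])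
  also have "\<dots> = tr (((\<lambda>v. TT *v v) ^^ Suc m) w) \<otimes>\<^bsub>GG\<^esub> g0 [^]\<^bsub>GG\<^esub> Suc m"
    by (simp only: ps funpow.simps(2) o_apply)
  finally show ?case .
qed

lemma mzp_pos: "mat_zpow_act TT (int m) = (\<lambda>v. TT *v v) ^^ m"
  by (simp add: mat_zpow_act_def)

lemma mzp_neg: "mat_zpow_act TT (- int m) = (\<lambda>v. matrix_inv TT *v v) ^^ m"
  by (cases "m = 0") (simp_all add: mat_zpow_act_def)

lemma conj_int: "g0 [^]\<^bsub>GG\<^esub> (k::int) \<otimes>\<^bsub>GG\<^esub> tr w = tr (mat_zpow_act TT k w) \<otimes>\<^bsub>GG\<^esub> g0 [^]\<^bsub>GG\<^esub> k"
proof (cases k rule: int_cases2)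
  case (nonneg m)
  then show ?thesis by (simp add: int_pow_int mzp_pos conj_nat)
next
  case (nonpos m)
  define w' where "w' = ((\<lambda>v. matrix_inv TT *v v) ^^ m) w"
  let ?h = "g0 [^]\<^bsub>GG\<^esub> m"
  have hc: "?h \<in> carrier GG" by (simp add: g0_carrier)
  have e: "?h \<otimes>\<^bsub>GG\<^esub> tr w' = tr w \<otimes>\<^bsub>GG\<^esub> ?h"
    using conj_nat[of m w'] by (simp add: w'_def TT_Ti_pow)
  have "inv\<^bsub>GG\<^esub> ?h \<otimes>\<^bsub>GG\<^esub> tr w = inv\<^bsub>GG\<^esub> ?h \<otimes>\<^bsub>GG\<^esub> (tr w \<otimes>\<^bsub>GG\<^esub> ?h) \<otimes>\<^bsub>GG\<^esub> inv\<^bsub>GG\<^esub> ?h"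
    using hc by (simp add: BG.m_assoc tr_carrier)
  also have "\<dots> = inv\<^bsub>GG\<^esub> ?h \<otimes>\<^bsub>GG\<^esub> (?h \<otimes>\<^bsub>GG\<^esub> tr w') \<otimes>\<^bsub>GG\<^esub> inv\<^bsub>GG\<^esub> ?h"
    by (simp add: e)
  also have "\<dots> = tr w' \<otimes>\<^bsub>GG\<^esub> inv\<^bsub>GG\<^esub> ?h"
    using hc by (simp add: BG.m_assoc[symmetric] tr_carrier)
  finally have "inv\<^bsub>GG\<^esub> ?h \<otimes>\<^bsub>GG\<^esub> tr w = tr w' \<otimes>\<^bsub>GG\<^esub> inv\<^bsub>GG\<^esub> ?h" .
  moreover have "g0 [^]\<^bsub>GG\<^esub> k = inv\<^bsub>GG\<^esub> ?h" using nonpos by (simp add: BG.int_pow_neg_int g0_carrier)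
  moreover have "mat_zpow_act TT k w = w'" using nonpos by (simp add: mzp_neg w'_def)
  ultimately show ?thesis by simp
qed

end


context pset begin

interpretation BG: group GG by (rule group_BijGroup)

definition phi :: "int \<times> (int^'m) \<Rightarrow> complex \<times> (nat \<Rightarrow> complex) \<Rightarrow> complex \<times> (nat \<Rightarrow> complex)" where
  "phi x = tr (snd x) \<otimes>\<^bsub>GG\<^esub> g0 [^]\<^bsub>GG\<^esub> (fst x)"

lemma phi_carrier: "phi x \<in> carrier GG"
  by (simp add: phi_def tr_carrier g0_carrier)

lemma pow_carrier: "g0 [^]\<^bsub>GG\<^esub> (k::int) \<in> carrier GG" by (simp add: g0_carrier)

lemma conj_int': "X \<in> carrier GG \<Longrightarrow> g0 [^]\<^bsub>GG\<^esub> (k::int) \<otimes>\<^bsub>GG\<^esub> (tr w \<otimes>\<^bsub>GG\<^esub> X) = tr (mat_zpow_act TT k w) \<otimes>\<^bsub>GG\<^esub> (g0 [^]\<^bsub>GG\<^esub> k \<otimes>\<^bsub>GG\<^esub> X)"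
  by (simp add: BG.m_assoc[symmetric] pow_carrier tr_carrier conj_int)

lemma phi_hom: "phi (mult (semidirect_Z M) x y) = phi x \<otimes>\<^bsub>GG\<^esub> phi y"
proof -
  obtain k v where x: "x = (k, v)" by (cases x)
  obtain l w where y: "y = (l, w)" by (cases y)
  have "phi (mult (semidirect_Z M) x y) = tr (v + mat_zpow_act TT k w) \<otimes>\<^bsub>GG\<^esub> g0 [^]\<^bsub>GG\<^esub> (k + l)"
    by (simp add: x y semidirect_Z_def phi_def TT_def)
  also have "\<dots> = tr v \<otimes>\<^bsub>GG\<^esub> (tr (mat_zpow_act TT k w) \<otimes>\<^bsub>GG\<^esub> (g0 [^]\<^bsub>GG\<^esub> k \<otimes>\<^bsub>GG\<^esub> g0 [^]\<^bsub>GG\<^esub> l))"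
    by (simp add: tr_mult[symmetric] BG.int_pow_mult g0_carrier tr_carrier BG.m_assoc)
  also have "\<dots> = tr v \<otimes>\<^bsub>GG\<^esub> (g0 [^]\<^bsub>GG\<^esub> k \<otimes>\<^bsub>GG\<^esub> (tr w \<otimes>\<^bsub>GG\<^esub> g0 [^]\<^bsub>GG\<^esub> l))"
    by (simp add: conj_int' pow_carrier)
  also have "\<dots> = phi x \<otimes>\<^bsub>GG\<^esub> phi y"
    by (simp add: x y phi_def BG.m_assoc tr_carrier pow_carrier)
  finally show ?thesis .
qed

lemma fst_pow: "p \<in> HC_domain n \<Longrightarrow> (g0 [^]\<^bsub>GG\<^esub> (m::nat)) p \<in> HC_domain n \<and> fst ((g0 [^]\<^bsub>GG\<^esub> m) p) = complex_of_real \<alpha> ^ m * fst p"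
proof (induction m arbitrary: p)
  case 0 then show ?case by (simp add: GG_one_eval)
next
  case (Suc m)
  have "(g0 [^]\<^bsub>GG\<^esub> Suc m) p = (g0 [^]\<^bsub>GG\<^esub> m) (g0 p)"
    using Suc.prems by (simp add: GG_mult_eval g0_carrier)
  moreover have "g0 p \<in> HC_domain n" "fst (g0 p) = complex_of_real \<alpha> * fst p"
    using Suc.prems gz_in by (cases p; auto simp: g0_def gz_eq)+
  ultimately show ?case using Suc.IH[of "g0 p"] by simp
qed

lemma tr_eval: "p \<in> HC_domain n \<Longrightarrow> tr u p = trf u p" by (simp add: tr_def)

lemma pow_tr: "g0 [^]\<^bsub>GG\<^esub> (m::nat) = tr u \<Longrightarrow> m = 0"
proof -
  assume e: "g0 [^]\<^bsub>GG\<^esub> m = tr u"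
  define p1 :: "complex \<times> (nat \<Rightarrow> complex)" where "p1 = (\<i>, \<lambda>_. 0)"
  define p2 :: "complex \<times> (nat \<Rightarrow> complex)" where "p2 = (2 * \<i>, \<lambda>_. 0)"
  have p1: "p1 \<in> HC_domain n" by (simp add: p1_def HC_domain_def)
  have p2: "p2 \<in> HC_domain n" by (simp add: p2_def HC_domain_def)
  have "complex_of_real \<alpha> ^ m * \<i> = \<i> + complex_of_real (sa u)"
    using fst_pow[OF p1, of m] e tr_eval[OF p1, of u] by (simp add: p1_def trf_def)
  moreover have "complex_of_real \<alpha> ^ m * (2 * \<i>) = 2 * \<i> + complex_of_real (sa u)"
    using fst_pow[OF p2, of m] e tr_eval[OF p2, of u] by (simp add: p2_def trf_def)
  ultimately have E: "2 * \<i> + complex_of_real (sa u) = 2 * (\<i> + complex_of_real (sa u))"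
    by (metis mult.left_commute)
  have "Re (2 * \<i> + complex_of_real (sa u)) = Re (2 * (\<i> + complex_of_real (sa u)))" by (simp only: E)
  then have "sa u = 0" by simp
  with \<open>complex_of_real \<alpha> ^ m * \<i> = \<i> + complex_of_real (sa u)\<close>
  have "complex_of_real \<alpha> ^ m * \<i> = \<i>" by simp
  then have "complex_of_real (\<alpha> ^ m) = 1" by (simp add: of_real_power)
  then have "\<alpha> ^ m = 1" using of_real_eq_1_iff by blast
  then have "norm \<alpha> = 1 \<or> m = 0" by (rule power_eq_1_iff)
  then show "m = 0" using alpha_pos alpha_ne1 by auto
qed

lemma phi_one: "phi (k, v) = \<one>\<^bsub>GG\<^esub> \<Longrightarrow> k = 0 \<and> v = 0"
proof -
  assume h: "phi (k, v) = \<one>\<^bsub>GG\<^esub>"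
  have "g0 [^]\<^bsub>GG\<^esub> k = tr (- v) \<otimes>\<^bsub>GG\<^esub> (tr v \<otimes>\<^bsub>GG\<^esub> g0 [^]\<^bsub>GG\<^esub> k)"
    by (simp add: BG.m_assoc[symmetric] tr_carrier pow_carrier tr_mult tr_0[symmetric])
  also have "\<dots> = tr (- v)" using h by (simp add: phi_def tr_carrier)
  finally have e: "g0 [^]\<^bsub>GG\<^esub> k = tr (- v)" .
  have k0: "k = 0"
  proof (cases k rule: int_cases2)
    case (nonneg m)
    then have "g0 [^]\<^bsub>GG\<^esub> m = tr (- v)" using e by (simp add: int_pow_int)
    then show ?thesis using pow_tr nonneg by simp
  next
    case (nonpos m)
    then have "inv\<^bsub>GG\<^esub> (g0 [^]\<^bsub>GG\<^esub> m) = tr (- v)" using e by (simp add: BG.int_pow_neg_int g0_carrier)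
    then have "g0 [^]\<^bsub>GG\<^esub> m = inv\<^bsub>GG\<^esub> (tr (- v))" by (metis BG.inv_inv BG.nat_pow_closed g0_carrier)
    then have "g0 [^]\<^bsub>GG\<^esub> m = tr v" by (simp add: tr_inv)
    then show ?thesis using pow_tr nonpos by simp
  qed
  then have "tr (- v) = \<one>\<^bsub>GG\<^esub>" using e by simp
  then have "tr v = \<one>\<^bsub>GG\<^esub>" using tr_inv[of "- v"] by simp
  define p1 :: "complex \<times> (nat \<Rightarrow> complex)" where "p1 = (\<i>, \<lambda>_. 0)"
  have p1: "p1 \<in> HC_domain n" by (simp add: p1_def HC_domain_def)
  have "trf v p1 = p1" using \<open>tr v = \<one>\<^bsub>GG\<^esub>\<close> tr_eval[OF p1, of v] GG_one_eval[OF p1] by simp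
  then have sa0: "sa v = 0" and sb0: "\<forall>j<n. sb v j = 0"
    by (auto simp: p1_def trf_def fun_eq_iff split: if_splits)
  have "v = 0" by (rule u_indep) (use sa0 sb0 in \<open>simp_all add: sa_def sb_def\<close>)
  then show ?thesis using k0 by simp
qed

lemma phi_inj: "inj phi"
proof (rule injI)
  fix x y assume e: "phi x = phi y"
  obtain k v where x: "x = (k, v)" by (cases x)
  obtain l w where y: "y = (l, w)" by (cases y)
  have gen: "tr (- w) \<otimes>\<^bsub>GG\<^esub> phi (k', v') \<otimes>\<^bsub>GG\<^esub> g0 [^]\<^bsub>GG\<^esub> (- l) = phi (k' - l, v' - w)" for k' v'
  proof -
    have "tr (- w) \<otimes>\<^bsub>GG\<^esub> phi (k', v') \<otimes>\<^bsub>GG\<^esub> g0 [^]\<^bsub>GG\<^esub> (- l)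
        = (tr (- w) \<otimes>\<^bsub>GG\<^esub> tr v') \<otimes>\<^bsub>GG\<^esub> (g0 [^]\<^bsub>GG\<^esub> k' \<otimes>\<^bsub>GG\<^esub> g0 [^]\<^bsub>GG\<^esub> (- l))"
      by (simp add: phi_def BG.m_assoc tr_carrier pow_carrier)
    also have "\<dots> = phi (k' - l, v' - w)"
      using BG.int_pow_mult[OF g0_carrier, of k' "-l"] by (simp add: tr_mult phi_def)
    finally show ?thesis .
  qed
  have "phi (k - l, v - w) = phi (l - l, w - w)"
    using gen[of k v] gen[of l w] e x y by simp
  also have "\<dots> = \<one>\<^bsub>GG\<^esub>" by (simp add: phi_def tr_0)
  finally have "k - l = 0 \<and> v - w = 0" by (rule phi_one)
  then show "x = y" using x y by simp
qed

end


definition ev :: "'m \<Rightarrow> int^'m" where "ev i = (\<chi> j. if j = i then 1 else 0)"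

lemma vec_expand: "v = (\<Sum>i\<in>UNIV. (v$i) *s ev i)"
proof -
  have "(\<Sum>i\<in>UNIV. (v$i) *s ev i) $ j = v $ j" for j
  proof -
    have "(\<Sum>i\<in>UNIV. (v$i) *s ev i) $ j = (\<Sum>i\<in>UNIV. if i = j then v$i else 0)"
      unfolding sum_component by (rule sum.cong) (auto simp: ev_def)
    then show ?thesis by simp
  qed
  then show ?thesis by (simp add: vec_eq_iff)
qed

lemma vec_int_induct:
  fixes P :: "int^'m \<Rightarrow> bool"
  assumes P0: "P 0" and Padd: "\<And>v w. P v \<Longrightarrow> P w \<Longrightarrow> P (v + w)" and Pneg: "\<And>v. P v \<Longrightarrow> P (- v)"
    and Pev: "\<And>i. P (ev i)"
  shows "P v"
proof -
  have sc: "P (c *s ev i)" for c i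
  proof (induction c rule: int_induct[where k=0])
    case base then show ?case using P0 by simp
  next
    case (step1 c)
    have "(c + 1) *s ev i = c *s ev i + ev i" by (simp add: vec_eq_iff algebra_simps)
    then show ?case using Padd[OF step1(2) Pev] by simp
  next
    case (step2 c)
    have "(c - 1) *s ev i = c *s ev i + - ev i" by (simp add: vec_eq_iff algebra_simps)
    then show ?case using Padd[OF step2(2) Pneg[OF Pev]] by simp
  qed
  have "P (\<Sum>i\<in>A. (v$i) *s ev i)" for A
  proof (induction A rule: infinite_finite_induct)
    case (infinite A) then show ?case using P0 by simp
  next
    case empty then show ?case using P0 by simp
  next
    case (insert x F) then show ?case using Padd[OF sc] by simp
  qed
  then show ?thesis using vec_expand[of v] by metis
qed

context pset begin

interpretation BG: group GG by (rule group_BijGroup)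

definition gens where
  "gens = insert (restrict (g_zero n \<alpha> R) (HC_domain n)) ((\<lambda>i. restrict (g_trans n a b i) (HC_domain n)) ` UNIV)"

lemma g_trans_eq: "g_trans n a b i = trf (ev i)"
proof -
  have "sa (ev i) = (\<Sum>k\<in>UNIV. if k = i then a$k else 0)"
    unfolding sa_def by (rule sum.cong) (auto simp: ev_def)
  then have "sa (ev i) = a$i" by simp
  moreover have "sb (ev i) j = b j $ i" for j
  proof -
    have "sb (ev i) j = (\<Sum>k\<in>UNIV. if k = i then b j $ k else 0)"
      unfolding sb_def by (rule sum.cong) (auto simp: ev_def)
    then show ?thesis by simp
  qed
  ultimately show ?thesis by (simp add: g_trans_def trf_def fun_eq_iff)
qed

lemma gens_eq: "gens = insert g0 (range (\<lambda>i. tr (ev i)))"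
  by (simp add: gens_def g0_def gz_def tr_def g_trans_eq)

lemma gens_carrier: "gens \<subseteq> carrier GG"
  by (auto simp: gens_eq g0_carrier tr_carrier)

lemma phi_simps: "phi (k, v) = tr v \<otimes>\<^bsub>GG\<^esub> g0 [^]\<^bsub>GG\<^esub> k" by (simp add: phi_def)

lemma gen_sub_range: "x \<in> generate GG gens \<Longrightarrow> x \<in> range phi"
proof (induction rule: generate.induct)
  case one
  have "phi (0, 0) = \<one>\<^bsub>GG\<^esub>" by (simp add: phi_simps tr_0)
  then show ?case by (metis rangeI)
next
  case (incl h)
  then show ?case
  proof (cases "h = g0")
    case True
    have "phi (1, 0) = g0" by (simp add: phi_simps tr_0 g0_carrier)
    then show ?thesis using True by (metis rangeI)
  next
    case False
    then obtain i where "h = tr (ev i)" using incl unfolding gens_eq by auto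
    moreover have "phi (0, ev i) = tr (ev i)" by (simp add: phi_simps tr_carrier)
    ultimately show ?thesis by (metis rangeI)
  qed
next
  case (inv h)
  then show ?case
  proof (cases "h = g0")
    case True
    have "phi (-1, 0) = inv\<^bsub>GG\<^esub> g0" by (simp add: phi_simps tr_0 g0_carrier BG.int_pow_neg)
    then show ?thesis using True by (metis rangeI)
  next
    case False
    then obtain i where "h = tr (ev i)" using inv unfolding gens_eq by auto
    moreover have "phi (0, - ev i) = inv\<^bsub>GG\<^esub> (tr (ev i))" by (simp add: phi_simps tr_carrier tr_inv)
    ultimately show ?thesis by (metis rangeI)
  qed
next
  case (eng h1 h2)
  then obtain x y where "h1 = phi x" "h2 = phi y" by blast
  then have "h1 \<otimes>\<^bsub>GG\<^esub> h2 = phi (mult (semidirect_Z M) x y)" by (simp add: phi_hom)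
  then show ?case by (metis rangeI)
qed

lemma range_sub_gen: "phi x \<in> generate GG gens"
proof -
  have sub: "subgroup (generate GG gens) GG" by (rule BG.generate_is_subgroup[OF gens_carrier])
  have g0g: "g0 \<in> generate GG gens" by (rule generate.incl) (simp add: gens_eq)
  have pw: "g0 [^]\<^bsub>GG\<^esub> (k::int) \<in> generate GG gens" for k by (rule BG.subgroup_int_pow_closed[OF sub g0g])
  have trg: "tr v \<in> generate GG gens" for v
  proof (induction v rule: vec_int_induct)
    case 1 then show ?case using subgroup.one_closed[OF sub] by (simp add: tr_0)
  next
    case (2 v w) then show ?case using subgroup.m_closed[OF sub] by (metis tr_mult)
  next
    case (3 v) then show ?case using subgroup.m_inv_closed[OF sub] by (metis tr_inv)
  next
    case (4 i) then show ?case by (intro generate.incl) (simp add: gens_eq)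
  qed
  show ?thesis unfolding phi_def using subgroup.m_closed[OF sub trg pw] .
qed

lemma gen_eq: "generate GG gens = range phi"
  using gen_sub_range range_sub_gen by blast

lemma main_iso: "G_M n \<alpha> R a b \<cong> semidirect_Z M"
proof -
  let ?GM = "G_M n \<alpha> R a b"
  have cGM: "carrier ?GM = range phi" by (simp add: G_M_def Let_def gen_eq[symmetric] gens_def)
  have mGM: "mult ?GM = mult GG" by (simp add: G_M_def Let_def)
  define psi where "psi = inv_into UNIV phi"
  have pp: "psi (phi x) = x" for x unfolding psi_def using phi_inj by (simp add: inv_into_f_f)
  have "psi \<in> iso ?GM (semidirect_Z M)"
  proof (unfold iso_def, rule CollectI, rule conjI)
    show "psi \<in> hom ?GM (semidirect_Z M)"
    proof (unfold hom_def, rule CollectI, rule conjI)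
      show "psi \<in> carrier ?GM \<rightarrow> carrier (semidirect_Z M)" by (simp add: semidirect_Z_def)
      show "\<forall>x\<in>carrier ?GM. \<forall>y\<in>carrier ?GM. psi (x \<otimes>\<^bsub>?GM\<^esub> y) = psi x \<otimes>\<^bsub>semidirect_Z M\<^esub> psi y"
      proof (intro ballI)
        fix x y assume "x \<in> carrier ?GM" "y \<in> carrier ?GM"
        then obtain p q where "x = phi p" "y = phi q" using cGM by auto
        then show "psi (x \<otimes>\<^bsub>?GM\<^esub> y) = psi x \<otimes>\<^bsub>semidirect_Z M\<^esub> psi y"
          using mGM by (simp add: phi_hom[symmetric] pp)
      qed
    qed
    have "bij_betw phi UNIV (range phi)" using phi_inj by (simp add: bij_betw_def)
    then have "bij_betw psi (range phi) UNIV" unfolding psi_def by (rule bij_betw_inv_into)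
    then show "bij_betw psi (carrier ?GM) (carrier (semidirect_Z M))"
      using cGM by (simp add: semidirect_Z_def)
  qed
  then show ?thesis by (rule is_isoI)
qed

end


theorem proposition2p4:
  fixes n :: nat and M :: "int^'m^'m" and \<alpha> :: real and a :: "real^'m"
    and b :: "nat \<Rightarrow> complex^'m" and R :: "nat \<Rightarrow> nat \<Rightarrow> complex"
  assumes n_ge: "n \<ge> 1"
    and dim: "CARD('m) = 2 * n + 1"
    and detM: "det M = 1"
    and alpha_eig: "is_eigenvalue_c M (complex_of_real \<alpha>)"
    and only_real: "\<And>e. is_eigenvalue_c M e \<Longrightarrow> Im e = 0 \<Longrightarrow> e = complex_of_real \<alpha>"
    and alpha_pos: "\<alpha> > 0" and alpha_ne1: "\<alpha> \<noteq> 1"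
    and alpha_simple: "Polynomial.order (complex_of_real \<alpha>) (charpoly_c M) = 1"
    and a_eig: "a \<noteq> 0" "real_mat M *v a = \<alpha> *\<^sub>R a"
    and b_in: "\<And>j. j < n \<Longrightarrow> b j \<in> W_space M"
    and b_indep: "\<And>c. (\<Sum>j<n. c j *s b j) = 0 \<Longrightarrow> \<forall>j<n. c j = 0"
    and b_span: "\<And>v. v \<in> W_space M \<Longrightarrow> \<exists>c. v = (\<Sum>j<n. c j *s b j)"
    and R_def: "\<And>j. j < n \<Longrightarrow> cplx_mat M *v b j = (\<Sum>l<n. R l j *s b l)"
  shows "G_M n \<alpha> R a b \<cong> semidirect_Z M"
proof -
  interpret P: pset n M \<alpha> a b R
    by unfold_locales (fact dim, fact detM, fact alpha_pos, fact alpha_ne1, fact a_eig(1), fact a_eig(2),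
      fact b_in, fact b_indep, fact R_def)
  show ?thesis by (rule P.main_iso)
qed

end
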